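(* For $0<\Delta<2$ let $S_1$ be the square with vertices $(\pm1,\pm1,0)$ and $S_2$ the square with vertices $(\Delta\pm1,0,\pm1)$ (both of side length 2); they form a Hopf link. The minimum distance energy of the link $S_1\cup S_2$ is $$E(\Delta)=8+8\left(\frac{1}{(2+\Delta)^2}+\frac{1}{(2-\Delta)^2}+\frac{2}{\Delta^2}+4+2+\frac{4}{1+\Delta^2}\right),$$ where $8$ is the sum of the self-energies of the two squares (4 each) and the remaining term is the cross-energy. The function $E$ has a unique minimizer $\Delta^*$ on $(0,2)$, where $x=(\Delta^* )^2$ is the unique root in $(0,4)$ of $2x^5-10x^4+73x^3-48x^2-40x-32=0$; numerically $\Delta^*\approx1.203$ and $E(\Delta^* )\approx93.5$.
   Context: For a link of closed polygons in $\mathbb R^3$ (each with at least four edges), the minimum distance (MD) energy is $E_{MD}=\sum_{(e,e')}\frac{\ell_e\ell_{e'}}{\mathrm{MD}(e,e')^2}$, summed over all ordered pairs $(e,e')$ of distinct edges that share no vertex (edges on different components never share a vertex), where $\ell_e$ is the length of edge $e$ and $\mathrm{MD}(e,e')$ is the minimum Euclidean distance between the two closed line segments. With this convention a square has MD energy $4$. *)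

theory Defs
  imports "HOL-Analysis.Analysis"
begin

text \<open>A closed polygon in R^3 is given by its list of vertices (v_0, ..., v_{n-1});
  its edges are the segments [v_i, v_{(i+1) mod n}].
  An edge of a link is indexed by a pair (k, i): component k, edge i.\<close>

type_synonym polygon = "(real^3) list"
type_synonym link = "polygon list"

definition link_edges :: "link \<Rightarrow> (nat \<times> nat) set" where
  "link_edges L = {(k, i). k < length L \<and> i < length (L ! k)}"

definition edge_start :: "link \<Rightarrow> nat \<times> nat \<Rightarrow> real^3" where
  "edge_start L e = (L ! fst e) ! snd e"

definition edge_end :: "link \<Rightarrow> nat \<times> nat \<Rightarrow> real^3" where
  "edge_end L e = (L ! fst e) ! (Suc (snd e) mod length (L ! fst e))"

definition edge_seg :: "link \<Rightarrow> nat \<times> nat \<Rightarrow> (real^3) set" where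
  "edge_seg L e = closed_segment (edge_start L e) (edge_end L e)"

definition edge_len :: "link \<Rightarrow> nat \<times> nat \<Rightarrow> real" where
  "edge_len L e = dist (edge_start L e) (edge_end L e)"

definition edge_vertex_idx :: "link \<Rightarrow> nat \<times> nat \<Rightarrow> nat set" where
  "edge_vertex_idx L e = {snd e, Suc (snd e) mod length (L ! fst e)}"

definition share_no_vertex :: "link \<Rightarrow> nat \<times> nat \<Rightarrow> nat \<times> nat \<Rightarrow> bool" where
  "share_no_vertex L e e' \<longleftrightarrow>
     fst e \<noteq> fst e' \<or> edge_vertex_idx L e \<inter> edge_vertex_idx L e' = {}"

definition MD :: "link \<Rightarrow> nat \<times> nat \<Rightarrow> nat \<times> nat \<Rightarrow> real" where
  "MD L e e' = setdist (edge_seg L e) (edge_seg L e')"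

definition MD_energy :: "link \<Rightarrow> real" where
  "MD_energy L =
     (\<Sum>(e, e') \<in> {(e, e'). e \<in> link_edges L \<and> e' \<in> link_edges L \<and> e \<noteq> e'
                        \<and> share_no_vertex L e e'}.
        edge_len L e * edge_len L e' / (MD L e e')\<^sup>2)"

definition square1 :: polygon where
  "square1 = [vector [1, 1, 0], vector [-1, 1, 0], vector [-1, -1, 0], vector [1, -1, 0]]"

definition square2 :: "real \<Rightarrow> polygon" where
  "square2 \<Delta> = [vector [\<Delta> + 1, 0, 1], vector [\<Delta> - 1, 0, 1],
                 vector [\<Delta> - 1, 0, -1], vector [\<Delta> + 1, 0, -1]]"

definition hopf_E :: "real \<Rightarrow> real" where
  "hopf_E \<Delta> = 8 + 8 * (1 / (2 + \<Delta>)\<^sup>2 + 1 / (2 - \<Delta>)\<^sup>2 + 2 / \<Delta>\<^sup>2 + 4 + 2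
                         + 4 / (1 + \<Delta>\<^sup>2))"

definition hopf_poly :: "real \<Rightarrow> real" where
  "hopf_poly x = 2 * x ^ 5 - 10 * x ^ 4 + 73 * x ^ 3 - 48 * x ^ 2 - 40 * x - 32"

end

theory Submission
  imports Defs
begin


lemma dist3: "dist (x::real^3) y = sqrt ((x$1-y$1)^2 + (x$2-y$2)^2 + (x$3-y$3)^2)"
  by (simp add: dist_vec_def L2_set_def sum_3 dist_real_def power2_abs)

lemma sq_le_abs: "0 \<le> (l::real) \<Longrightarrow> l \<le> \<bar>x\<bar> \<Longrightarrow> l^2 \<le> x^2"
  by (metis power2_abs power_mono)

lemma seg_MD:
  fixes a b c e :: "real^3"
  assumes "0\<le>lx" "0\<le>ly" "0\<le>lz"
  and lb: "\<And>u v. 0\<le>u \<Longrightarrow> u\<le>1 \<Longrightarrow> 0\<le>v \<Longrightarrow> v\<le>1 \<Longrightarrow>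
       lx \<le> \<bar>((1-u)*a$1+u*b$1) - ((1-v)*c$1+v * e$1)\<bar> \<and>
       ly \<le> \<bar>((1-u)*a$2+u*b$2) - ((1-v)*c$2+v * e$2)\<bar> \<and>
       lz \<le> \<bar>((1-u)*a$3+u*b$3) - ((1-v)*c$3+v * e$3)\<bar>"
  and w: "0\<le>uu" "uu\<le>1" "0\<le>vv" "vv\<le>1"
   "\<bar>((1-uu)*a$1+uu*b$1) - ((1-vv)*c$1+vv * e$1)\<bar> = lx"
   "\<bar>((1-uu)*a$2+uu*b$2) - ((1-vv)*c$2+vv * e$2)\<bar> = ly"
   "\<bar>((1-uu)*a$3+uu*b$3) - ((1-vv)*c$3+vv * e$3)\<bar> = lz"
  shows "(setdist (closed_segment a b) (closed_segment c e))^2 = lx^2+ly^2+lz^2"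
proof -
  define S where "S = lx^2+ly^2+lz^2"
  have S0: "0 \<le> S" unfolding S_def by simp
  have dp: "dist ((1-u) *\<^sub>R a + u *\<^sub>R b) ((1-v) *\<^sub>R c + v *\<^sub>R e) =
     sqrt ((((1-u)*a$1+u*b$1) - ((1-v)*c$1+v * e$1))^2 + (((1-u)*a$2+u*b$2) - ((1-v)*c$2+v * e$2))^2
        + (((1-u)*a$3+u*b$3) - ((1-v)*c$3+v * e$3))^2)" for u v
    by (simp add: dist3)
  have up: "setdist (closed_segment a b) (closed_segment c e) \<le> sqrt S"
  proof -
    have "(1-uu) *\<^sub>R a + uu *\<^sub>R b \<in> closed_segment a b" "(1-vv) *\<^sub>R c + vv *\<^sub>R e \<in> closed_segment c e"
      using w by (auto simp: closed_segment_def)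
    then have "setdist (closed_segment a b) (closed_segment c e) \<le> dist ((1-uu) *\<^sub>R a + uu *\<^sub>R b) ((1-vv) *\<^sub>R c + vv *\<^sub>R e)"
      by (rule setdist_le_dist)
    also have "\<dots> = sqrt S" unfolding dp S_def using w(5-7) by (metis power2_abs)
    finally show ?thesis .
  qed
  have lo: "sqrt S \<le> setdist (closed_segment a b) (closed_segment c e)"
  proof (rule le_setdistI)
    fix x y assume "x \<in> closed_segment a b" "y \<in> closed_segment c e"
    then obtain u v where uv: "0\<le>u" "u\<le>1" "0\<le>v" "v\<le>1" and xy: "x = (1-u) *\<^sub>R a + u *\<^sub>R b" "y = (1-v) *\<^sub>R c + v *\<^sub>R e"
      by (auto simp: closed_segment_def)
    from lb[OF uv] have l: "lx \<le> \<bar>((1-u)*a$1+u*b$1) - ((1-v)*c$1+v * e$1)\<bar>"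
       "ly \<le> \<bar>((1-u)*a$2+u*b$2) - ((1-v)*c$2+v * e$2)\<bar>"
       "lz \<le> \<bar>((1-u)*a$3+u*b$3) - ((1-v)*c$3+v * e$3)\<bar>" by auto
    show "sqrt S \<le> dist x y" unfolding xy dp S_def
      using sq_le_abs[OF assms(1) l(1)] sq_le_abs[OF assms(2) l(2)] sq_le_abs[OF assms(3) l(3)]
      by (intro real_sqrt_le_mono) linarith
  qed auto
  have "setdist (closed_segment a b) (closed_segment c e) = sqrt S" using up lo by linarith
  then show ?thesis using S0 S_def by simp
qed

lemma md_00_02:
  assumes "0 < D" "D < 2"
  shows "(MD [square1, square2 D] (0,0) (0,2))\<^sup>2 = (0)\<^sup>2 + (2)\<^sup>2 + (0)\<^sup>2"
    "(MD [square1, square2 D] (0,2) (0,0))\<^sup>2 = (0)\<^sup>2 + (2)\<^sup>2 + (0)\<^sup>2"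
proof -
  show 1: "(MD [square1, square2 D] (0,0) (0,2))\<^sup>2 = (0)\<^sup>2 + (2)\<^sup>2 + (0)\<^sup>2"
    unfolding MD_def edge_seg_def edge_start_def edge_end_def
    apply (rule seg_MD[where uu="0" and vv="1"])
    using assms by (auto simp: square1_def square2_def algebra_simps abs_if)
  then show "(MD [square1, square2 D] (0,2) (0,0))\<^sup>2 = (0)\<^sup>2 + (2)\<^sup>2 + (0)\<^sup>2"
    by (simp add: MD_def setdist_sym)
qed

lemma md_01_03:
  assumes "0 < D" "D < 2"
  shows "(MD [square1, square2 D] (0,1) (0,3))\<^sup>2 = (2)\<^sup>2 + (0)\<^sup>2 + (0)\<^sup>2"
    "(MD [square1, square2 D] (0,3) (0,1))\<^sup>2 = (2)\<^sup>2 + (0)\<^sup>2 + (0)\<^sup>2"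
proof -
  show 1: "(MD [square1, square2 D] (0,1) (0,3))\<^sup>2 = (2)\<^sup>2 + (0)\<^sup>2 + (0)\<^sup>2"
    unfolding MD_def edge_seg_def edge_start_def edge_end_def
    apply (rule seg_MD[where uu="0" and vv="1"])
    using assms by (auto simp: square1_def square2_def algebra_simps abs_if)
  then show "(MD [square1, square2 D] (0,3) (0,1))\<^sup>2 = (2)\<^sup>2 + (0)\<^sup>2 + (0)\<^sup>2"
    by (simp add: MD_def setdist_sym)
qed

lemma md_10_12:
  assumes "0 < D" "D < 2"
  shows "(MD [square1, square2 D] (1,0) (1,2))\<^sup>2 = (0)\<^sup>2 + (0)\<^sup>2 + (2)\<^sup>2"
    "(MD [square1, square2 D] (1,2) (1,0))\<^sup>2 = (0)\<^sup>2 + (0)\<^sup>2 + (2)\<^sup>2"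
proof -
  show 1: "(MD [square1, square2 D] (1,0) (1,2))\<^sup>2 = (0)\<^sup>2 + (0)\<^sup>2 + (2)\<^sup>2"
    unfolding MD_def edge_seg_def edge_start_def edge_end_def
    apply (rule seg_MD[where uu="0" and vv="1"])
    using assms by (auto simp: square1_def square2_def algebra_simps abs_if)
  then show "(MD [square1, square2 D] (1,2) (1,0))\<^sup>2 = (0)\<^sup>2 + (0)\<^sup>2 + (2)\<^sup>2"
    by (simp add: MD_def setdist_sym)
qed

lemma md_11_13:
  assumes "0 < D" "D < 2"
  shows "(MD [square1, square2 D] (1,1) (1,3))\<^sup>2 = (2)\<^sup>2 + (0)\<^sup>2 + (0)\<^sup>2"
    "(MD [square1, square2 D] (1,3) (1,1))\<^sup>2 = (2)\<^sup>2 + (0)\<^sup>2 + (0)\<^sup>2"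
proof -
  show 1: "(MD [square1, square2 D] (1,1) (1,3))\<^sup>2 = (2)\<^sup>2 + (0)\<^sup>2 + (0)\<^sup>2"
    unfolding MD_def edge_seg_def edge_start_def edge_end_def
    apply (rule seg_MD[where uu="0" and vv="1"])
    using assms by (auto simp: square1_def square2_def algebra_simps abs_if)
  then show "(MD [square1, square2 D] (1,3) (1,1))\<^sup>2 = (2)\<^sup>2 + (0)\<^sup>2 + (0)\<^sup>2"
    by (simp add: MD_def setdist_sym)
qed

lemma md_00_10:
  assumes "0 < D" "D < 2"
  shows "(MD [square1, square2 D] (0,0) (1,0))\<^sup>2 = (0)\<^sup>2 + (1)\<^sup>2 + (1)\<^sup>2"
    "(MD [square1, square2 D] (1,0) (0,0))\<^sup>2 = (0)\<^sup>2 + (1)\<^sup>2 + (1)\<^sup>2"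
proof -
  show 1: "(MD [square1, square2 D] (0,0) (1,0))\<^sup>2 = (0)\<^sup>2 + (1)\<^sup>2 + (1)\<^sup>2"
    unfolding MD_def edge_seg_def edge_start_def edge_end_def
    apply (rule seg_MD[where uu="0" and vv="D/2"])
    using assms by (auto simp: square1_def square2_def algebra_simps abs_if)
  then show "(MD [square1, square2 D] (1,0) (0,0))\<^sup>2 = (0)\<^sup>2 + (1)\<^sup>2 + (1)\<^sup>2"
    by (simp add: MD_def setdist_sym)
qed

lemma md_00_11:
  assumes "0 < D" "D < 2"
  shows "(MD [square1, square2 D] (0,0) (1,1))\<^sup>2 = (0)\<^sup>2 + (1)\<^sup>2 + (0)\<^sup>2"
    "(MD [square1, square2 D] (1,1) (0,0))\<^sup>2 = (0)\<^sup>2 + (1)\<^sup>2 + (0)\<^sup>2"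
proof -
  show 1: "(MD [square1, square2 D] (0,0) (1,1))\<^sup>2 = (0)\<^sup>2 + (1)\<^sup>2 + (0)\<^sup>2"
    unfolding MD_def edge_seg_def edge_start_def edge_end_def
    apply (rule seg_MD[where uu="1-D/2" and vv="1/2"])
    using assms by (auto simp: square1_def square2_def algebra_simps abs_if)
  then show "(MD [square1, square2 D] (1,1) (0,0))\<^sup>2 = (0)\<^sup>2 + (1)\<^sup>2 + (0)\<^sup>2"
    by (simp add: MD_def setdist_sym)
qed

lemma md_00_12:
  assumes "0 < D" "D < 2"
  shows "(MD [square1, square2 D] (0,0) (1,2))\<^sup>2 = (0)\<^sup>2 + (1)\<^sup>2 + (1)\<^sup>2"
    "(MD [square1, square2 D] (1,2) (0,0))\<^sup>2 = (0)\<^sup>2 + (1)\<^sup>2 + (1)\<^sup>2"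
proof -
  show 1: "(MD [square1, square2 D] (0,0) (1,2))\<^sup>2 = (0)\<^sup>2 + (1)\<^sup>2 + (1)\<^sup>2"
    unfolding MD_def edge_seg_def edge_start_def edge_end_def
    apply (rule seg_MD[where uu="0" and vv="1-D/2"])
    using assms by (auto simp: square1_def square2_def algebra_simps abs_if)
  then show "(MD [square1, square2 D] (1,2) (0,0))\<^sup>2 = (0)\<^sup>2 + (1)\<^sup>2 + (1)\<^sup>2"
    by (simp add: MD_def setdist_sym)
qed

lemma md_00_13:
  assumes "0 < D" "D < 2"
  shows "(MD [square1, square2 D] (0,0) (1,3))\<^sup>2 = (D)\<^sup>2 + (1)\<^sup>2 + (0)\<^sup>2"
    "(MD [square1, square2 D] (1,3) (0,0))\<^sup>2 = (D)\<^sup>2 + (1)\<^sup>2 + (0)\<^sup>2"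
proof -
  show 1: "(MD [square1, square2 D] (0,0) (1,3))\<^sup>2 = (D)\<^sup>2 + (1)\<^sup>2 + (0)\<^sup>2"
    unfolding MD_def edge_seg_def edge_start_def edge_end_def
    apply (rule seg_MD[where uu="0" and vv="1/2"])
    using assms by (auto simp: square1_def square2_def algebra_simps abs_if)
  then show "(MD [square1, square2 D] (1,3) (0,0))\<^sup>2 = (D)\<^sup>2 + (1)\<^sup>2 + (0)\<^sup>2"
    by (simp add: MD_def setdist_sym)
qed

lemma md_01_10:
  assumes "0 < D" "D < 2"
  shows "(MD [square1, square2 D] (0,1) (1,0))\<^sup>2 = (D)\<^sup>2 + (0)\<^sup>2 + (1)\<^sup>2"
    "(MD [square1, square2 D] (1,0) (0,1))\<^sup>2 = (D)\<^sup>2 + (0)\<^sup>2 + (1)\<^sup>2"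
proof -
  show 1: "(MD [square1, square2 D] (0,1) (1,0))\<^sup>2 = (D)\<^sup>2 + (0)\<^sup>2 + (1)\<^sup>2"
    unfolding MD_def edge_seg_def edge_start_def edge_end_def
    apply (rule seg_MD[where uu="1/2" and vv="1"])
    using assms by (auto simp: square1_def square2_def algebra_simps abs_if)
  then show "(MD [square1, square2 D] (1,0) (0,1))\<^sup>2 = (D)\<^sup>2 + (0)\<^sup>2 + (1)\<^sup>2"
    by (simp add: MD_def setdist_sym)
qed

lemma md_01_11:
  assumes "0 < D" "D < 2"
  shows "(MD [square1, square2 D] (0,1) (1,1))\<^sup>2 = (D)\<^sup>2 + (0)\<^sup>2 + (0)\<^sup>2"
    "(MD [square1, square2 D] (1,1) (0,1))\<^sup>2 = (D)\<^sup>2 + (0)\<^sup>2 + (0)\<^sup>2"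
proof -
  show 1: "(MD [square1, square2 D] (0,1) (1,1))\<^sup>2 = (D)\<^sup>2 + (0)\<^sup>2 + (0)\<^sup>2"
    unfolding MD_def edge_seg_def edge_start_def edge_end_def
    apply (rule seg_MD[where uu="1/2" and vv="1/2"])
    using assms by (auto simp: square1_def square2_def algebra_simps abs_if)
  then show "(MD [square1, square2 D] (1,1) (0,1))\<^sup>2 = (D)\<^sup>2 + (0)\<^sup>2 + (0)\<^sup>2"
    by (simp add: MD_def setdist_sym)
qed

lemma md_01_12:
  assumes "0 < D" "D < 2"
  shows "(MD [square1, square2 D] (0,1) (1,2))\<^sup>2 = (D)\<^sup>2 + (0)\<^sup>2 + (1)\<^sup>2"
    "(MD [square1, square2 D] (1,2) (0,1))\<^sup>2 = (D)\<^sup>2 + (0)\<^sup>2 + (1)\<^sup>2"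
proof -
  show 1: "(MD [square1, square2 D] (0,1) (1,2))\<^sup>2 = (D)\<^sup>2 + (0)\<^sup>2 + (1)\<^sup>2"
    unfolding MD_def edge_seg_def edge_start_def edge_end_def
    apply (rule seg_MD[where uu="1/2" and vv="0"])
    using assms by (auto simp: square1_def square2_def algebra_simps abs_if)
  then show "(MD [square1, square2 D] (1,2) (0,1))\<^sup>2 = (D)\<^sup>2 + (0)\<^sup>2 + (1)\<^sup>2"
    by (simp add: MD_def setdist_sym)
qed

lemma md_01_13:
  assumes "0 < D" "D < 2"
  shows "(MD [square1, square2 D] (0,1) (1,3))\<^sup>2 = (D+2)\<^sup>2 + (0)\<^sup>2 + (0)\<^sup>2"
    "(MD [square1, square2 D] (1,3) (0,1))\<^sup>2 = (D+2)\<^sup>2 + (0)\<^sup>2 + (0)\<^sup>2"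
proof -
  show 1: "(MD [square1, square2 D] (0,1) (1,3))\<^sup>2 = (D+2)\<^sup>2 + (0)\<^sup>2 + (0)\<^sup>2"
    unfolding MD_def edge_seg_def edge_start_def edge_end_def
    apply (rule seg_MD[where uu="1/2" and vv="1/2"])
    using assms by (auto simp: square1_def square2_def algebra_simps abs_if)
  then show "(MD [square1, square2 D] (1,3) (0,1))\<^sup>2 = (D+2)\<^sup>2 + (0)\<^sup>2 + (0)\<^sup>2"
    by (simp add: MD_def setdist_sym)
qed

lemma md_02_10:
  assumes "0 < D" "D < 2"
  shows "(MD [square1, square2 D] (0,2) (1,0))\<^sup>2 = (0)\<^sup>2 + (1)\<^sup>2 + (1)\<^sup>2"
    "(MD [square1, square2 D] (1,0) (0,2))\<^sup>2 = (0)\<^sup>2 + (1)\<^sup>2 + (1)\<^sup>2"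
proof -
  show 1: "(MD [square1, square2 D] (0,2) (1,0))\<^sup>2 = (0)\<^sup>2 + (1)\<^sup>2 + (1)\<^sup>2"
    unfolding MD_def edge_seg_def edge_start_def edge_end_def
    apply (rule seg_MD[where uu="1" and vv="D/2"])
    using assms by (auto simp: square1_def square2_def algebra_simps abs_if)
  then show "(MD [square1, square2 D] (1,0) (0,2))\<^sup>2 = (0)\<^sup>2 + (1)\<^sup>2 + (1)\<^sup>2"
    by (simp add: MD_def setdist_sym)
qed

lemma md_02_11:
  assumes "0 < D" "D < 2"
  shows "(MD [square1, square2 D] (0,2) (1,1))\<^sup>2 = (0)\<^sup>2 + (1)\<^sup>2 + (0)\<^sup>2"
    "(MD [square1, square2 D] (1,1) (0,2))\<^sup>2 = (0)\<^sup>2 + (1)\<^sup>2 + (0)\<^sup>2"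
proof -
  show 1: "(MD [square1, square2 D] (0,2) (1,1))\<^sup>2 = (0)\<^sup>2 + (1)\<^sup>2 + (0)\<^sup>2"
    unfolding MD_def edge_seg_def edge_start_def edge_end_def
    apply (rule seg_MD[where uu="D/2" and vv="1/2"])
    using assms by (auto simp: square1_def square2_def algebra_simps abs_if)
  then show "(MD [square1, square2 D] (1,1) (0,2))\<^sup>2 = (0)\<^sup>2 + (1)\<^sup>2 + (0)\<^sup>2"
    by (simp add: MD_def setdist_sym)
qed

lemma md_02_12:
  assumes "0 < D" "D < 2"
  shows "(MD [square1, square2 D] (0,2) (1,2))\<^sup>2 = (0)\<^sup>2 + (1)\<^sup>2 + (1)\<^sup>2"
    "(MD [square1, square2 D] (1,2) (0,2))\<^sup>2 = (0)\<^sup>2 + (1)\<^sup>2 + (1)\<^sup>2"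
proof -
  show 1: "(MD [square1, square2 D] (0,2) (1,2))\<^sup>2 = (0)\<^sup>2 + (1)\<^sup>2 + (1)\<^sup>2"
    unfolding MD_def edge_seg_def edge_start_def edge_end_def
    apply (rule seg_MD[where uu="D/2" and vv="0"])
    using assms by (auto simp: square1_def square2_def algebra_simps abs_if)
  then show "(MD [square1, square2 D] (1,2) (0,2))\<^sup>2 = (0)\<^sup>2 + (1)\<^sup>2 + (1)\<^sup>2"
    by (simp add: MD_def setdist_sym)
qed

lemma md_02_13:
  assumes "0 < D" "D < 2"
  shows "(MD [square1, square2 D] (0,2) (1,3))\<^sup>2 = (D)\<^sup>2 + (1)\<^sup>2 + (0)\<^sup>2"
    "(MD [square1, square2 D] (1,3) (0,2))\<^sup>2 = (D)\<^sup>2 + (1)\<^sup>2 + (0)\<^sup>2"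
proof -
  show 1: "(MD [square1, square2 D] (0,2) (1,3))\<^sup>2 = (D)\<^sup>2 + (1)\<^sup>2 + (0)\<^sup>2"
    unfolding MD_def edge_seg_def edge_start_def edge_end_def
    apply (rule seg_MD[where uu="1" and vv="1/2"])
    using assms by (auto simp: square1_def square2_def algebra_simps abs_if)
  then show "(MD [square1, square2 D] (1,3) (0,2))\<^sup>2 = (D)\<^sup>2 + (1)\<^sup>2 + (0)\<^sup>2"
    by (simp add: MD_def setdist_sym)
qed

lemma md_03_10:
  assumes "0 < D" "D < 2"
  shows "(MD [square1, square2 D] (0,3) (1,0))\<^sup>2 = (0)\<^sup>2 + (0)\<^sup>2 + (1)\<^sup>2"
    "(MD [square1, square2 D] (1,0) (0,3))\<^sup>2 = (0)\<^sup>2 + (0)\<^sup>2 + (1)\<^sup>2"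
proof -
  show 1: "(MD [square1, square2 D] (0,3) (1,0))\<^sup>2 = (0)\<^sup>2 + (0)\<^sup>2 + (1)\<^sup>2"
    unfolding MD_def edge_seg_def edge_start_def edge_end_def
    apply (rule seg_MD[where uu="1/2" and vv="D/2"])
    using assms by (auto simp: square1_def square2_def algebra_simps abs_if)
  then show "(MD [square1, square2 D] (1,0) (0,3))\<^sup>2 = (0)\<^sup>2 + (0)\<^sup>2 + (1)\<^sup>2"
    by (simp add: MD_def setdist_sym)
qed

lemma md_03_11:
  assumes "0 < D" "D < 2"
  shows "(MD [square1, square2 D] (0,3) (1,1))\<^sup>2 = (2-D)\<^sup>2 + (0)\<^sup>2 + (0)\<^sup>2"
    "(MD [square1, square2 D] (1,1) (0,3))\<^sup>2 = (2-D)\<^sup>2 + (0)\<^sup>2 + (0)\<^sup>2"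
proof -
  show 1: "(MD [square1, square2 D] (0,3) (1,1))\<^sup>2 = (2-D)\<^sup>2 + (0)\<^sup>2 + (0)\<^sup>2"
    unfolding MD_def edge_seg_def edge_start_def edge_end_def
    apply (rule seg_MD[where uu="1/2" and vv="1/2"])
    using assms by (auto simp: square1_def square2_def algebra_simps abs_if)
  then show "(MD [square1, square2 D] (1,1) (0,3))\<^sup>2 = (2-D)\<^sup>2 + (0)\<^sup>2 + (0)\<^sup>2"
    by (simp add: MD_def setdist_sym)
qed

lemma md_03_12:
  assumes "0 < D" "D < 2"
  shows "(MD [square1, square2 D] (0,3) (1,2))\<^sup>2 = (0)\<^sup>2 + (0)\<^sup>2 + (1)\<^sup>2"
    "(MD [square1, square2 D] (1,2) (0,3))\<^sup>2 = (0)\<^sup>2 + (0)\<^sup>2 + (1)\<^sup>2"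
proof -
  show 1: "(MD [square1, square2 D] (0,3) (1,2))\<^sup>2 = (0)\<^sup>2 + (0)\<^sup>2 + (1)\<^sup>2"
    unfolding MD_def edge_seg_def edge_start_def edge_end_def
    apply (rule seg_MD[where uu="1/2" and vv="1-D/2"])
    using assms by (auto simp: square1_def square2_def algebra_simps abs_if)
  then show "(MD [square1, square2 D] (1,2) (0,3))\<^sup>2 = (0)\<^sup>2 + (0)\<^sup>2 + (1)\<^sup>2"
    by (simp add: MD_def setdist_sym)
qed

lemma md_03_13:
  assumes "0 < D" "D < 2"
  shows "(MD [square1, square2 D] (0,3) (1,3))\<^sup>2 = (D)\<^sup>2 + (0)\<^sup>2 + (0)\<^sup>2"
    "(MD [square1, square2 D] (1,3) (0,3))\<^sup>2 = (D)\<^sup>2 + (0)\<^sup>2 + (0)\<^sup>2"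
proof -
  show 1: "(MD [square1, square2 D] (0,3) (1,3))\<^sup>2 = (D)\<^sup>2 + (0)\<^sup>2 + (0)\<^sup>2"
    unfolding MD_def edge_seg_def edge_start_def edge_end_def
    apply (rule seg_MD[where uu="1/2" and vv="1/2"])
    using assms by (auto simp: square1_def square2_def algebra_simps abs_if)
  then show "(MD [square1, square2 D] (1,3) (0,3))\<^sup>2 = (D)\<^sup>2 + (0)\<^sup>2 + (0)\<^sup>2"
    by (simp add: MD_def setdist_sym)
qed

lemma len_facts: "length [square1, square2 D] = 2" "length square1 = 4" "length (square2 D) = 4"
  "[square1, square2 D] ! 0 = square1" "[square1, square2 D] ! 1 = square2 D"
  by (simp_all add: square1_def square2_def)

lemma edge_lens:
  "edge_len [square1, square2 D] (0,0) = 2" "edge_len [square1, square2 D] (0,1) = 2"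
  "edge_len [square1, square2 D] (0,2) = 2" "edge_len [square1, square2 D] (0,3) = 2"
  "edge_len [square1, square2 D] (1,0) = 2" "edge_len [square1, square2 D] (1,1) = 2"
  "edge_len [square1, square2 D] (1,2) = 2" "edge_len [square1, square2 D] (1,3) = 2"
  by (simp_all add: edge_len_def edge_start_def edge_end_def square1_def square2_def dist3)

lemma snv: "k < 2 \<Longrightarrow> k' < 2 \<Longrightarrow> share_no_vertex [square1, square2 D] (k,i) (k',i') \<longleftrightarrow>
   (k \<noteq> k' \<or> {i, Suc i mod 4} \<inter> {i', Suc i' mod 4} = {})"
  by (auto simp: share_no_vertex_def edge_vertex_idx_def len_facts less_2_cases_iff)

lemma energy:
  assumes "0 < D" "D < 2"
  shows "MD_energy [square1, square2 D] = hopf_E D"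
proof -
  define L where "L = [square1, square2 D]"
  have nz: "D \<noteq> 0" "D + 2 \<noteq> 0" "2 - D \<noteq> 0" "D\<^sup>2 + 1 \<noteq> 0" "2 + D \<noteq> 0" "1 + D\<^sup>2 \<noteq> 0"
    using assms by (smt (verit) zero_le_power2)+
  have den: "D\<^sup>2 * ((2 - D)\<^sup>2 * (D + 2)\<^sup>2) + D ^ 4 * ((2 - D)\<^sup>2 * (D + 2)\<^sup>2) \<noteq> 0"
  proof -
    have "D\<^sup>2 * ((2 - D)\<^sup>2 * (D + 2)\<^sup>2) + D ^ 4 * ((2 - D)\<^sup>2 * (D + 2)\<^sup>2)
       = D\<^sup>2 * (2 - D)\<^sup>2 * (D + 2)\<^sup>2 * (1 + D\<^sup>2)" by algebra
    then show ?thesis using nz by simp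
  qed
  define E where "E = {(0::nat,0::nat),(0,1),(0,2),(0,3),(1,0),(1,1),(1,2),(1,3)}"
  have LE: "link_edges L = E"
    unfolding link_edges_def L_def E_def square1_def square2_def
    by (auto simp: less_Suc_eq numeral_eq_Suc)
  have fE: "finite (E \<times> E)" unfolding E_def by simp
  have S: "{(e, e'). e \<in> link_edges L \<and> e' \<in> link_edges L \<and> e \<noteq> e' \<and> share_no_vertex L e e'}
     = {p \<in> E \<times> E. fst p \<noteq> snd p \<and> share_no_vertex L (fst p) (snd p)}"
    unfolding LE by auto
  have "MD_energy L = (\<Sum>p \<in> E \<times> E. if fst p \<noteq> snd p \<and> share_no_vertex L (fst p) (snd p)
        then edge_len L (fst p) * edge_len L (snd p) / (MD L (fst p) (snd p))\<^sup>2 else 0)"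
    unfolding MD_energy_def S by (simp add: sum.inter_filter[OF fE] case_prod_beta)
  also have "\<dots> = (\<Sum>e \<in> E. \<Sum>e' \<in> E. if e \<noteq> e' \<and> share_no_vertex L e e'
        then edge_len L e * edge_len L e' / (MD L e e')\<^sup>2 else 0)"
    by (simp add: sum.cartesian_product case_prod_beta)
  also have "\<dots> = hopf_E D"
    unfolding E_def L_def
    using md_00_02[OF assms, unfolded One_nat_def] md_01_03[OF assms, unfolded One_nat_def] md_10_12[OF assms, unfolded One_nat_def] md_11_13[OF assms, unfolded One_nat_def] md_00_10[OF assms, unfolded One_nat_def] md_00_11[OF assms, unfolded One_nat_def] md_00_12[OF assms, unfolded One_nat_def] md_00_13[OF assms, unfolded One_nat_def] md_01_10[OF assms, unfolded One_nat_def] md_01_11[OF assms, unfolded One_nat_def] md_01_12[OF assms, unfolded One_nat_def] md_01_13[OF assms, unfolded One_nat_def] md_02_10[OF assms, unfolded One_nat_def] md_02_11[OF assms, unfolded One_nat_def] md_02_12[OF assms, unfolded One_nat_def] md_02_13[OF assms, unfolded One_nat_def] md_03_10[OF assms, unfolded One_nat_def] md_03_11[OF assms, unfolded One_nat_def] md_03_12[OF assms, unfolded One_nat_def] md_03_13[OF assms, unfolded One_nat_def]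
    apply (simp add: snv edge_lens[unfolded One_nat_def])
    unfolding hopf_E_def using nz den by (simp add: field_simps)
  finally show ?thesis unfolding L_def .
qed




lemma ident:
  fixes t :: real
  assumes nz: "t \<noteq> 0" "2 + t \<noteq> 0" "2 - t \<noteq> 0" "1 + t\<^sup>2 \<noteq> 0"
  shows "8*(-2/(2+t)^3 + 2/(2-t)^3 - 4/t^3 - 8*t/(1+t\<^sup>2)^2) =
     64 * hopf_poly (t\<^sup>2) / (t^3 * (2-t)^3 * (2+t)^3 * (1 + t\<^sup>2)^2)"
proof -
  have "8*(-2*t^3*(2-t)^3*(1+t\<^sup>2)^2 + 2*t^3*(2+t)^3*(1+t\<^sup>2)^2 - 4*(2+t)^3*(2-t)^3*(1+t\<^sup>2)^2
      - 8*(t*t^3)*(2+t)^3*(2-t)^3) = 64 * hopf_poly (t\<^sup>2)"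
    unfolding hopf_poly_def by algebra
  then show ?thesis using nz
    by (simp add: field_simps)
qed

lemma d0: "a \<noteq> 0 \<Longrightarrow> DERIV (\<lambda>x::real. 1/x\<^sup>2) a :> -2/a^3"
  by (rule derivative_eq_intros refl | simp)+ (simp add: field_simps eval_nat_numeral)
lemma d1: "2 + t \<noteq> 0 \<Longrightarrow> DERIV (\<lambda>x::real. 1/(2+x)\<^sup>2) t :> -2/(2+t)^3"
proof -
  assume "2 + t \<noteq> 0"
  have g: "DERIV (\<lambda>x::real. 2 + x) t :> 1" by (rule derivative_eq_intros refl | simp)+
  from DERIV_chain2[OF d0[OF \<open>2 + t \<noteq> 0\<close>] g]
  show ?thesis by simp
qed
lemma d2: "2 - t \<noteq> 0 \<Longrightarrow> DERIV (\<lambda>x::real. 1/(2-x)\<^sup>2) t :> 2/(2-t)^3"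
proof -
  assume "2 - t \<noteq> 0"
  have g: "DERIV (\<lambda>x::real. 2 - x) t :> -1" by (rule derivative_eq_intros refl | simp)+
  from DERIV_chain2[OF d0[OF \<open>2 - t \<noteq> 0\<close>] g]
  show ?thesis by simp
qed
lemma d3: "t \<noteq> 0 \<Longrightarrow> DERIV (\<lambda>x::real. 2/x\<^sup>2) t :> -4/t^3"
  by (rule derivative_eq_intros refl | simp)+ (simp add: field_simps eval_nat_numeral)
lemma d4: "1 + t\<^sup>2 \<noteq> 0 \<Longrightarrow> DERIV (\<lambda>x::real. 4/(1+x\<^sup>2)) t :> -8*t/(1+t\<^sup>2)^2"
  by (rule derivative_eq_intros refl | simp)+ (simp add: field_simps eval_nat_numeral)

lemma hopf_deriv:
  assumes "0 < t" "t < 2"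
  shows "DERIV hopf_E t :> 64 * hopf_poly (t\<^sup>2) / (t^3 * (2-t)^3 * (2+t)^3 * (1 + t\<^sup>2)^2)"
proof -
  have nz: "t \<noteq> 0" "2 + t \<noteq> 0" "2 - t \<noteq> 0" "1 + t\<^sup>2 \<noteq> 0"
  proof -
    have "0 \<le> t\<^sup>2" by simp
    show "t \<noteq> 0" "2 + t \<noteq> 0" "2 - t \<noteq> 0" using assms by auto
    show "1 + t\<^sup>2 \<noteq> 0" using \<open>0 \<le> t\<^sup>2\<close> by linarith
  qed
  have "DERIV (\<lambda>x. 8 + 8 * (1 / (2 + x)\<^sup>2 + 1 / (2 - x)\<^sup>2 + 2 / x\<^sup>2 + 4 + 2 + 4 / (1 + x\<^sup>2))) t
     :> 0 + 8 * (-2/(2+t)^3 + 2/(2-t)^3 + -4/t^3 + 0 + 0 + -8*t/(1+t\<^sup>2)^2)"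
    by (intro DERIV_add DERIV_cmult DERIV_const d1 d2 d3 d4 nz)
  then have "DERIV hopf_E t :> 8*(-2/(2+t)^3 + 2/(2-t)^3 - 4/t^3 - 8*t/(1+t\<^sup>2)^2)"
    unfolding hopf_E_def[abs_def] by simp
  then show ?thesis using ident[OF nz] by simp
qed

lemma p_neg_small: "0 < x \<Longrightarrow> x \<le> 1 \<Longrightarrow> hopf_poly x < 0"
proof -
  assume x: "0 < x" "x \<le> 1"
  have "x^5 \<le> 1" "x^2 \<le> 1" using x by (auto intro!: power_le_one)
  have "x^3 \<le> x^2" using x by (intro power_decreasing) auto
  have "0 \<le> x^4" by simp
  note facts = this \<open>x^5 \<le> 1\<close> \<open>x^2 \<le> 1\<close> \<open>x^3 \<le> x^2\<close>
  then show ?thesis unfolding hopf_poly_def using x facts by linarith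
qed

lemma p_deriv: "DERIV hopf_poly x :> 10*x^4 - 40*x^3 + 219*x^2 - 96*x - 40"
  unfolding hopf_poly_def
  by (rule derivative_eq_intros refl | simp)+

lemma p_mono: assumes "1 \<le> x" "x < y" shows "hopf_poly x < hopf_poly y"
proof (rule DERIV_pos_imp_increasing[OF assms(2)])
  fix t assume t: "x \<le> t" "t \<le> y"
  then have t1: "1 \<le> t" using assms by linarith
  have "0 \<le> t\<^sup>2 * (10*(t-2)\<^sup>2)" by simp
  moreover have "t\<^sup>2 * (10*(t-2)\<^sup>2) = 10*t^4 - 40*t^3 + 40*t^2" by algebra
  moreover have "t \<le> t\<^sup>2"
  proof -
    have "t * 1 \<le> t * t" using t1 by (intro mult_left_mono) auto
    then show ?thesis by (simp add: power2_eq_square)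
  qed
  ultimately have "10*t^4 - 40*t^3 + 219*t^2 - 96*t - 40 > 0"
    using t1 by linarith
  then show "\<exists>y. DERIV hopf_poly t :> y \<and> 0 < y" using p_deriv by blast
qed

definition aa :: real where "aa = 12036/10000"
definition bb :: real where "bb = 12037/10000"

lemma p_aa: "hopf_poly (aa\<^sup>2) < 0" by (simp add: hopf_poly_def aa_def power_numeral_reduce)
lemma p_bb: "hopf_poly (bb\<^sup>2) > 0" by (simp add: hopf_poly_def bb_def power_numeral_reduce)

lemma root_exists: "\<exists>x0. aa\<^sup>2 < x0 \<and> x0 < bb\<^sup>2 \<and> hopf_poly x0 = 0"
proof -
  have c: "\<forall>x. aa\<^sup>2 \<le> x \<and> x \<le> bb\<^sup>2 \<longrightarrow> isCont hopf_poly x"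
    using p_deriv DERIV_isCont by blast
  have "aa\<^sup>2 \<le> bb\<^sup>2" by (simp add: aa_def bb_def)
  from IVT[of hopf_poly "aa\<^sup>2" 0 "bb\<^sup>2", OF _ _ this c] p_aa p_bb
  obtain x0 where "aa\<^sup>2 \<le> x0" "x0 \<le> bb\<^sup>2" "hopf_poly x0 = 0" by force
  moreover have "x0 \<noteq> aa\<^sup>2" "x0 \<noteq> bb\<^sup>2" using p_aa p_bb \<open>hopf_poly x0 = 0\<close> by auto
  ultimately show ?thesis by force
qed

lemma p_sign:
  assumes x0: "aa\<^sup>2 < x0" "x0 < bb\<^sup>2" "hopf_poly x0 = 0"
  shows "\<And>x. 0 < x \<Longrightarrow> x < x0 \<Longrightarrow> hopf_poly x < 0"
    and "\<And>x. x0 < x \<Longrightarrow> hopf_poly x > 0"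
proof -
  have x01: "1 < x0" using x0 by (simp add: aa_def power2_eq_square)
  fix x assume "0 < x" "x < x0"
  then show "hopf_poly x < 0"
    using p_neg_small[of x] p_mono[of x x0] x0(3) by (cases "x \<le> 1") auto
next
  have x01: "1 < x0" using x0 by (simp add: aa_def power2_eq_square)
  fix x assume "x0 < x"
  then show "hopf_poly x > 0" using p_mono[of x0 x] x01 x0(3) by auto
qed

lemma den_pos: "0 < (t::real) \<Longrightarrow> t < 2 \<Longrightarrow> 0 < t^3 * (2-t)^3 * (2+t)^3 * (1 + t\<^sup>2)^2"
proof -
  assume t: "0 < t" "t < 2"
  have "0 < 1 + t\<^sup>2" by (smt (verit) zero_le_power2)
  then show ?thesis using t by simp
qed

lemma E_cont: "0 < a \<Longrightarrow> b < 2 \<Longrightarrow> continuous_on {a..b} hopf_E"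
  by (intro continuous_at_imp_continuous_on ballI DERIV_isCont[OF hopf_deriv]) auto

lemma E_dec:
  assumes "0 < D" "D < d0" "d0 < 2" and neg: "\<And>t. D < t \<Longrightarrow> t < d0 \<Longrightarrow> hopf_poly (t\<^sup>2) < 0"
  shows "hopf_E d0 < hopf_E D"
proof (rule DERIV_neg_imp_decreasing_open[OF assms(2)])
  fix t assume t: "D < t" "t < d0"
  then have "0 < t" "t < 2" using assms by auto
  then have "64 * hopf_poly (t\<^sup>2) / (t^3 * (2-t)^3 * (2+t)^3 * (1 + t\<^sup>2)^2) < 0"
    using den_pos[of t] neg[OF t] by (intro divide_neg_pos) auto
  then show "\<exists>y. DERIV hopf_E t :> y \<and> y < 0"
    using hopf_deriv[of t] \<open>0 < t\<close> \<open>t < 2\<close> by blast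
qed (rule E_cont, use assms in auto)

lemma E_inc:
  assumes "0 < d0" "d0 < D" "D < 2" and pos: "\<And>t. d0 < t \<Longrightarrow> t < D \<Longrightarrow> hopf_poly (t\<^sup>2) > 0"
  shows "hopf_E d0 < hopf_E D"
proof (rule DERIV_pos_imp_increasing_open[OF assms(2)])
  fix t assume t: "d0 < t" "t < D"
  then have "0 < t" "t < 2" using assms by auto
  then have "64 * hopf_poly (t\<^sup>2) / (t^3 * (2-t)^3 * (2+t)^3 * (1 + t\<^sup>2)^2) > 0"
    using den_pos[of t] pos[OF t] by (intro divide_pos_pos) auto
  then show "\<exists>y. DERIV hopf_E t :> y \<and> y > 0"
    using hopf_deriv[of t] \<open>0 < t\<close> \<open>t < 2\<close> by blast
qed (rule E_cont, use assms in auto)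

lemma analytic:
  shows "(\<exists>!x::real. 0 < x \<and> x < 4 \<and> hopf_poly x = 0)
       \<and> (\<exists>!d::real. 0 < d \<and> d < 2 \<and>
             (\<forall>\<Delta>. 0 < \<Delta> \<and> \<Delta> < 2 \<longrightarrow> hopf_E d \<le> hopf_E \<Delta>))
       \<and> (\<forall>d::real. 0 < d \<and> d < 2 \<and>
             (\<forall>\<Delta>. 0 < \<Delta> \<and> \<Delta> < 2 \<longrightarrow> hopf_E d \<le> hopf_E \<Delta>) \<longrightarrow>
             hopf_poly (d\<^sup>2) = 0 \<and> \<bar>d - 1.203\<bar> < 0.001 \<and> \<bar>hopf_E d - 93.5\<bar> < 0.01)"
proof -
  obtain x0 where x0: "aa\<^sup>2 < x0" "x0 < bb\<^sup>2" "hopf_poly x0 = 0" using root_exists by blast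
  note sg = p_sign[OF x0]
  define d0 where "d0 = sqrt x0"
  have aa0: "0 < aa" and bb2: "bb < 2" by (simp_all add: aa_def bb_def)
  have "sqrt (aa\<^sup>2) < d0" "d0 < sqrt (bb\<^sup>2)" unfolding d0_def using x0 by (auto simp del: real_sqrt_abs)
  then have d0: "aa < d0" "d0 < bb" by (simp_all add: aa_def bb_def)
  have x0pos: "0 < x0" using x0(1) aa0 by (smt (verit) zero_le_power2)
  have d0sq: "d0\<^sup>2 = x0" unfolding d0_def using x0pos by simp
  have sq_less: "t\<^sup>2 < x0" if "0 < t" "t < d0" for t
    using power_strict_mono[of t d0 2] that d0sq by auto
  have sq_gt: "x0 < t\<^sup>2" if "d0 < t" for t
    using power_strict_mono[of d0 t 2] that d0sq d0 aa0 by auto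
  have min: "hopf_E d0 < hopf_E D" if "0 < D" "D < 2" "D \<noteq> d0" for D
  proof (cases "D < d0")
    case True
    show ?thesis
      by (rule E_dec) (use True that d0 bb2 in \<open>auto intro!: sg(1) sq_less\<close>)
  next
    case False
    then have "d0 < D" using that by auto
    show ?thesis
      by (rule E_inc) (use \<open>d0 < D\<close> that d0 aa0 in \<open>auto intro!: sg(2) sq_gt\<close>)
  qed
  have d0min: "0 < d0 \<and> d0 < 2 \<and> (\<forall>\<Delta>. 0 < \<Delta> \<and> \<Delta> < 2 \<longrightarrow> hopf_E d0 \<le> hopf_E \<Delta>)"
  proof (intro conjI allI impI)
    show "0 < d0" using d0 aa0 by linarith
    show "d0 < 2" using d0 bb2 by linarith
    fix \<Delta> :: real assume "0 < \<Delta> \<and> \<Delta> < 2"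
    then show "hopf_E d0 \<le> hopf_E \<Delta>" using min[of \<Delta>] by (cases "\<Delta> = d0") auto
  qed
  have uniq: "d = d0" if "0 < d \<and> d < 2 \<and> (\<forall>\<Delta>. 0 < \<Delta> \<and> \<Delta> < 2 \<longrightarrow> hopf_E d \<le> hopf_E \<Delta>)" for d
  proof (rule ccontr)
    assume "d \<noteq> d0"
    then have "hopf_E d0 < hopf_E d" using min[of d] that by auto
    moreover have "hopf_E d \<le> hopf_E d0" using that d0min by auto
    ultimately show False by simp
  qed
  have A: "\<exists>!x::real. 0 < x \<and> x < 4 \<and> hopf_poly x = 0"
  proof
    show "0 < x0 \<and> x0 < 4 \<and> hopf_poly x0 = 0" using x0 x0pos by (simp add: bb_def power2_eq_square)
  next
    fix x assume "0 < x \<and> x < 4 \<and> hopf_poly x = 0"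
    then show "x = x0" using sg[of x] by (cases x x0 rule: linorder_cases) auto
  qed
  have B: "\<exists>!d::real. 0 < d \<and> d < 2 \<and> (\<forall>\<Delta>. 0 < \<Delta> \<and> \<Delta> < 2 \<longrightarrow> hopf_E d \<le> hopf_E \<Delta>)"
  proof (rule ex1I[of _ d0])
    show "0 < d0 \<and> d0 < 2 \<and> (\<forall>\<Delta>. 0 < \<Delta> \<and> \<Delta> < 2 \<longrightarrow> hopf_E d0 \<le> hopf_E \<Delta>)"
      by (rule d0min)
  next
    fix d assume "0 < d \<and> d < 2 \<and> (\<forall>\<Delta>. 0 < \<Delta> \<and> \<Delta> < 2 \<longrightarrow> hopf_E d \<le> hopf_E \<Delta>)"
    then show "d = d0" by (rule uniq)
  qed
  have Eup: "hopf_E d0 < 93.51"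
  proof -
    have "hopf_E d0 \<le> hopf_E bb" using d0min aa0 bb2 d0 by auto
    also have "hopf_E bb < 93.51" by (simp add: hopf_E_def bb_def power_numeral_reduce)
    finally show ?thesis .
  qed
  have Elo: "93.49 < hopf_E d0"
  proof -
    have d0p: "0 < d0" using d0 aa0 by simp
    have "1/(2+bb)\<^sup>2 \<le> 1/(2+d0)\<^sup>2"
      using d0 d0p by (intro divide_left_mono power_mono mult_pos_pos) auto
    moreover have "1/(2-aa)\<^sup>2 \<le> 1/(2-d0)\<^sup>2"
      using d0 d0p bb2 by (intro divide_left_mono power_mono mult_pos_pos) auto
    moreover have "2/bb\<^sup>2 \<le> 2/d0\<^sup>2"
      using d0 d0p by (intro divide_left_mono power_mono mult_pos_pos) auto
    moreover have "4/(1+bb\<^sup>2) \<le> 4/(1+d0\<^sup>2)"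
      using d0 d0p by (intro divide_left_mono add_left_mono power_mono) (auto intro!: mult_pos_pos add_pos_nonneg)
    moreover have "93.49 < 8 + 8 * (1/(2+bb)\<^sup>2 + 1/(2-aa)\<^sup>2 + 2/bb\<^sup>2 + 4 + 2 + 4/(1+bb\<^sup>2))"
      by (simp add: aa_def bb_def power_numeral_reduce)
    ultimately show ?thesis unfolding hopf_E_def by (smt (verit))
  qed
  have C: "\<forall>d::real. 0 < d \<and> d < 2 \<and>
             (\<forall>\<Delta>. 0 < \<Delta> \<and> \<Delta> < 2 \<longrightarrow> hopf_E d \<le> hopf_E \<Delta>) \<longrightarrow>
             hopf_poly (d\<^sup>2) = 0 \<and> \<bar>d - 1.203\<bar> < 0.001 \<and> \<bar>hopf_E d - 93.5\<bar> < 0.01"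
  proof (intro allI impI)
    fix d assume "0 < d \<and> d < 2 \<and> (\<forall>\<Delta>. 0 < \<Delta> \<and> \<Delta> < 2 \<longrightarrow> hopf_E d \<le> hopf_E \<Delta>)"
    then have "d = d0" by (rule uniq)
    then show "hopf_poly (d\<^sup>2) = 0 \<and> \<bar>d - 1.203\<bar> < 0.001 \<and> \<bar>hopf_E d - 93.5\<bar> < 0.01"
    proof -
      have "\<bar>hopf_E d0 - 93.5\<bar> < 0.01" unfolding abs_less_iff using Eup Elo by (simp add: power2_eq_square)
      moreover have "\<bar>d0 - 1.203\<bar> < 0.001" unfolding abs_less_iff using d0 unfolding aa_def bb_def by (simp add: power2_eq_square)
      ultimately show ?thesis using d0sq x0(3) \<open>d = d0\<close> by simp
    qed
  qed
  show ?thesis using A B C by (intro conjI)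
qed


theorem mainTheorem4:
  shows "(\<forall>\<Delta>::real. 0 < \<Delta> \<and> \<Delta> < 2 \<longrightarrow>
            MD_energy [square1, square2 \<Delta>] = hopf_E \<Delta>)
       \<and> (\<exists>!x::real. 0 < x \<and> x < 4 \<and> hopf_poly x = 0)
       \<and> (\<exists>!d::real. 0 < d \<and> d < 2 \<and>
             (\<forall>\<Delta>. 0 < \<Delta> \<and> \<Delta> < 2 \<longrightarrow> hopf_E d \<le> hopf_E \<Delta>))
       \<and> (\<forall>d::real. 0 < d \<and> d < 2 \<and>
             (\<forall>\<Delta>. 0 < \<Delta> \<and> \<Delta> < 2 \<longrightarrow> hopf_E d \<le> hopf_E \<Delta>) \<longrightarrow>
             hopf_poly (d\<^sup>2) = 0 \<and> \<bar>d - 1.203\<bar> < 0.001 \<and> \<bar>hopf_E d - 93.5\<bar> < 0.01)"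
proof (rule conjI[OF _ analytic])
  show "\<forall>\<Delta>::real. 0 < \<Delta> \<and> \<Delta> < 2 \<longrightarrow> MD_energy [square1, square2 \<Delta>] = hopf_E \<Delta>"
  proof (intro allI impI)
    fix \<Delta> :: real assume "0 < \<Delta> \<and> \<Delta> < 2"
    then show "MD_energy [square1, square2 \<Delta>] = hopf_E \<Delta>" using energy by simp
  qed
qed

end
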